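(* Let $G$ be a group and let $\omega$ be a weight on $G$ which is not strongly non-amenable; let $\mathcal A=l^1(G,\omega)$. Let $\phi:\mathcal B(\mathcal A,c_0(G))\to c_0(G)$ be a bounded left $\mathcal A$-module homomorphism, and let $M\in\mathcal B(\mathcal A,c_0(G))'$ be defined by $\langle M,T\rangle=\langle\delta_{e_G},\phi(T)\rangle$. Then $M$ vanishes on every $T\in\mathcal B(\mathcal A,c_0(G))$ whose matrix $(\langle\delta_s,T(\delta_t)\rangle)_{(s,t)\in G\times G}$ lies in $c_0(G\times G)$.
   Context: Weight: $\omega:G\to(0,\infty)$, $\omega(st)\le\omega(s)\omega(t)$, $\omega(e_G)=1$; $\Omega(g,h)=\omega(gh)\omega(g)^{-1}\omega(h)^{-1}$; $l^1(G,\omega)$ is $l^1(G)$ with $\delta_g\star\delta_h=\Omega(g,h)\delta_{gh}$, dual $l^\infty(G)$ with $\langle f,\delta_g\rangle=f_g$. $c_0(G)$ is a left $\mathcal A$-module via $\langle a\cdot\mu,b\rangle=\mu(ba)$. $\mathcal B(\mathcal A,c_0(G))$ is a left $\mathcal A$-module via $(a\cdot T)(b)=T(ba)$. The weight is strongly non-amenable if for every $\epsilon>0$ the set $\{g:\omega(g)\omega(g^{-1})<\epsilon^{-1}\}$ is finite; so "not strongly non-amenable" means there is $K>0$ with $\{g:\omega(g)\omega(g^{-1})\le K\}$ infinite. *)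

theory Defs
  imports "HOL-Analysis.Analysis"
begin

text \<open>The group G is the (arbitrary, possibly non-abelian) type 'g of class group_add;
  the group product gh is written g + h, the identity e_G is 0, and g^{-1} is - g.
  Scalars are complex.\<close>

definition weight :: "('g::group_add \<Rightarrow> real) \<Rightarrow> bool" where
  "weight \<omega> \<longleftrightarrow> (\<forall>g. 0 < \<omega> g) \<and> (\<forall>s t. \<omega> (s + t) \<le> \<omega> s * \<omega> t) \<and> \<omega> 0 = 1"

definition strongly_non_amenable :: "('g::group_add \<Rightarrow> real) \<Rightarrow> bool" where
  "strongly_non_amenable \<omega> \<longleftrightarrow>
     (\<forall>\<epsilon>::real. \<epsilon> > 0 \<longrightarrow> finite {g. \<omega> g * \<omega> (- g) < inverse \<epsilon>})"

definition Omega :: "('g::group_add \<Rightarrow> real) \<Rightarrow> 'g \<Rightarrow> 'g \<Rightarrow> real" where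
  "Omega \<omega> g h = \<omega> (g + h) / (\<omega> g * \<omega> h)"

definition l1 :: "('g \<Rightarrow> complex) \<Rightarrow> bool" where
  "l1 a \<longleftrightarrow> (\<lambda>g. norm (a g)) summable_on UNIV"

definition l1norm :: "('g \<Rightarrow> complex) \<Rightarrow> real" where
  "l1norm a = (\<Sum>\<^sub>\<infinity>g. norm (a g))"

definition c0 :: "('i \<Rightarrow> complex) \<Rightarrow> bool" where
  "c0 f \<longleftrightarrow> (\<forall>\<epsilon>>0. finite {x. \<epsilon> \<le> norm (f x)})"

definition delta :: "'g \<Rightarrow> 'g \<Rightarrow> complex" where
  "delta g = (\<lambda>h. if h = g then 1 else 0)"

text \<open>Product of l^1(G,omega): delta_g * delta_h = Omega(g,h) delta_{gh}, extended bilinearly.\<close>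
definition conv :: "('g::group_add \<Rightarrow> real) \<Rightarrow> ('g \<Rightarrow> complex) \<Rightarrow> ('g \<Rightarrow> complex) \<Rightarrow> 'g \<Rightarrow> complex" where
  "conv \<omega> a b = (\<lambda>k. \<Sum>\<^sub>\<infinity>g. a g * b (- g + k) * complex_of_real (Omega \<omega> g (- g + k)))"

definition pair :: "('g \<Rightarrow> complex) \<Rightarrow> ('g \<Rightarrow> complex) \<Rightarrow> complex" where
  "pair f b = (\<Sum>\<^sub>\<infinity>g. f g * b g)"

text \<open>Left module action on c_0(G): <a.mu, b> = mu(b a); the element a.mu is
  determined by its values <a.mu, delta_g>.\<close>
definition act_c0 :: "('g::group_add \<Rightarrow> real) \<Rightarrow> ('g \<Rightarrow> complex) \<Rightarrow> ('g \<Rightarrow> complex) \<Rightarrow> 'g \<Rightarrow> complex" where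
  "act_c0 \<omega> a \<mu> = (\<lambda>g. pair \<mu> (conv \<omega> (delta g) a))"

text \<open>B(A, c_0(G)): bounded linear maps from l^1(G) into c_0(G), represented extensionally
  (value 0 outside l^1).\<close>
definition Bop :: "(('g \<Rightarrow> complex) \<Rightarrow> ('g \<Rightarrow> complex)) \<Rightarrow> bool" where
  "Bop T \<longleftrightarrow>
     (\<forall>a. l1 a \<longrightarrow> c0 (T a)) \<and>
     (\<forall>a b. l1 a \<longrightarrow> l1 b \<longrightarrow> T (\<lambda>g. a g + b g) = (\<lambda>g. T a g + T b g)) \<and>
     (\<forall>a c. l1 a \<longrightarrow> T (\<lambda>g. c * a g) = (\<lambda>g. c * T a g)) \<and>
     (\<forall>a. \<not> l1 a \<longrightarrow> T a = (\<lambda>_. 0)) \<and>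
     (\<exists>K. \<forall>a g. l1 a \<longrightarrow> norm (T a g) \<le> K * l1norm a)"

definition opnorm :: "(('g \<Rightarrow> complex) \<Rightarrow> ('g \<Rightarrow> complex)) \<Rightarrow> real" where
  "opnorm T = Sup {norm (T a g) | a g. l1 a \<and> l1norm a \<le> 1}"

definition act_B :: "('g::group_add \<Rightarrow> real) \<Rightarrow> ('g \<Rightarrow> complex) \<Rightarrow>
    (('g \<Rightarrow> complex) \<Rightarrow> ('g \<Rightarrow> complex)) \<Rightarrow> ('g \<Rightarrow> complex) \<Rightarrow> ('g \<Rightarrow> complex)" where
  "act_B \<omega> a T = (\<lambda>b. if l1 b then T (conv \<omega> b a) else (\<lambda>_. 0))"

definition bounded_module_hom ::
  "('g::group_add \<Rightarrow> real) \<Rightarrow> ((('g \<Rightarrow> complex) \<Rightarrow> ('g \<Rightarrow> complex)) \<Rightarrow> ('g \<Rightarrow> complex)) \<Rightarrow> bool" where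
  "bounded_module_hom \<omega> \<phi> \<longleftrightarrow>
     (\<forall>T. Bop T \<longrightarrow> c0 (\<phi> T)) \<and>
     (\<forall>T T'. Bop T \<longrightarrow> Bop T' \<longrightarrow> \<phi> (\<lambda>a g. T a g + T' a g) = (\<lambda>g. \<phi> T g + \<phi> T' g)) \<and>
     (\<forall>T c. Bop T \<longrightarrow> \<phi> (\<lambda>a g. c * T a g) = (\<lambda>g. c * \<phi> T g)) \<and>
     (\<exists>K. \<forall>T g. Bop T \<longrightarrow> norm (\<phi> T g) \<le> K * opnorm T) \<and>
     (\<forall>a T. l1 a \<longrightarrow> Bop T \<longrightarrow> \<phi> (act_B \<omega> a T) = act_c0 \<omega> a (\<phi> T))"

definition Mfun :: "((('g::group_add \<Rightarrow> complex) \<Rightarrow> ('g \<Rightarrow> complex)) \<Rightarrow> ('g \<Rightarrow> complex)) \<Rightarrow>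
    (('g \<Rightarrow> complex) \<Rightarrow> ('g \<Rightarrow> complex)) \<Rightarrow> complex" where
  "Mfun \<phi> T = pair (\<phi> T) (delta 0)"

end

theory Submission
  imports Defs
begin

lemma fam_add:
  fixes m :: "'a set \<Rightarrow> real"
  assumes add: "\<And>A B. A \<inter> B = {} \<Longrightarrow> m (A \<union> B) = m A + m B"
    and fin: "finite I"
    and disj: "\<forall>i\<in>I. \<forall>j\<in>I. i \<noteq> j \<longrightarrow> X i \<inter> X j = {}"
  shows "m (\<Union>i\<in>I. X i) = (\<Sum>i\<in>I. m (X i))"
  using fin disj
proof (induction I rule: finite_induct)
  case empty
  have "m ({} \<union> {}) = m {} + m {}" by (rule add) simp
  then show ?case by simp
next
  case (insert x F)
  have "(\<Union>i\<in>insert x F. X i) = X x \<union> (\<Union>i\<in>F. X i)" by simp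
  moreover have "X x \<inter> (\<Union>i\<in>F. X i) = {}" using insert by fastforce
  ultimately have "m (\<Union>i\<in>insert x F. X i) = m (X x) + m (\<Union>i\<in>F. X i)"
    using add by simp
  then show ?case using insert by simp
qed

lemma step_small:
  fixes m :: "nat set \<Rightarrow> real"
  assumes add: "\<And>A B. A \<inter> B = {} \<Longrightarrow> m (A \<union> B) = m A + m B"
    and bnd: "\<And>A. \<bar>m A\<bar> \<le> B"
    and inf: "infinite P" and eta: "\<eta> > 0"
  shows "\<exists>Q\<subseteq>P. infinite Q \<and> (\<forall>J\<subseteq>Q. \<bar>m J\<bar> \<le> \<eta>)"
proof (rule ccontr)
  assume "\<not> ?thesis"
  hence H: "\<And>Q. Q \<subseteq> P \<Longrightarrow> infinite Q \<Longrightarrow> \<exists>J\<subseteq>Q. \<bar>m J\<bar> > \<eta>" by (meson not_le)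
  have B0: "B \<ge> 0" using bnd[of "{}"] by simp
  obtain N :: nat where N: "2 * B / \<eta> < N" using reals_Archimedean2 by blast
  hence N': "2 * B < N * \<eta>" using eta by (simp add: field_simps)
  hence Npos: "N > 0" using B0 eta by (cases N) auto
  define e where "e = enumerate P"
  have sm: "strict_mono e" unfolding e_def using inf by (rule strict_mono_enumerate)
  have inj: "inj e" using sm strict_mono_imp_inj_on by blast
  have eP: "e k \<in> P" for k unfolding e_def using inf by (rule enumerate_in_set)
  define Q where "Q i = e ` {k. k mod N = i}" for i
  have QP: "Q i \<subseteq> P" for i using eP Q_def by auto
  have Qinf: "infinite (Q i)" if "i < N" for i
  proof
    assume "finite (Q i)"
    hence fin: "finite {k. k mod N = i}"
      using finite_image_iff[OF inj_on_subset[OF inj subset_UNIV]] unfolding Q_def by blast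
    have "inj (\<lambda>j. i + N * j)" using Npos by (auto simp: inj_def)
    moreover have "range (\<lambda>j. i + N * j) \<subseteq> {k. k mod N = i}" using that by auto
    ultimately have "finite (range (\<lambda>j. i + N * j))" using fin finite_subset by blast
    hence "finite (UNIV :: nat set)"
      using finite_imageD \<open>inj (\<lambda>j. i + N * j)\<close> by blast
    then show False by simp
  qed
  have "\<forall>i. \<exists>J. i < N \<longrightarrow> J \<subseteq> Q i \<and> \<bar>m J\<bar> > \<eta>"
    using H QP Qinf by blast
  from choice[OF this] obtain J where J0: "\<forall>i. i < N \<longrightarrow> J i \<subseteq> Q i \<and> \<bar>m (J i)\<bar> > \<eta>" by blast
  hence J: "\<And>i. i < N \<Longrightarrow> J i \<subseteq> Q i \<and> \<bar>m (J i)\<bar> > \<eta>" by blast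
  have Qdisj: "Q i \<inter> Q j = {}" if "i \<noteq> j" "i < N" "j < N" for i j
    using that inj unfolding Q_def by (auto simp: inj_def)
  have Jdisj: "\<forall>i\<in>I. \<forall>j\<in>I. i \<noteq> j \<longrightarrow> J i \<inter> J j = {}" if "I \<subseteq> {..<N}" for I
  proof (intro ballI impI)
    fix i j assume ij: "i \<in> I" "j \<in> I" "i \<noteq> j"
    then have "i < N" "j < N" using that by auto
    then show "J i \<inter> J j = {}" using Qdisj[OF ij(3)] J by blast
  qed
  define Pos where "Pos = {i. i < N \<and> m (J i) > 0}"
  define Neg where "Neg = {i. i < N \<and> \<not> m (J i) > 0}"
  have cardeq: "card Pos + card Neg = N"
  proof -
    have "Pos \<union> Neg = {..<N}" "Pos \<inter> Neg = {}" unfolding Pos_def Neg_def by auto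
    moreover have "finite Pos" "finite Neg" unfolding Pos_def Neg_def by auto
    ultimately have "card (Pos \<union> Neg) = card Pos + card Neg" using card_Un_disjoint by blast
    then show ?thesis using \<open>Pos \<union> Neg = {..<N}\<close> by simp
  qed
  have fP: "finite Pos" "finite Neg" unfolding Pos_def Neg_def by auto
  have "m (\<Union>i\<in>Pos. J i) = (\<Sum>i\<in>Pos. m (J i))"
    by (rule fam_add[OF add fP(1) Jdisj]) (auto simp: Pos_def)
  also have "\<dots> \<ge> (\<Sum>i\<in>Pos. \<eta>)"
    by (rule sum_mono) (use J in \<open>fastforce simp: Pos_def\<close>)
  finally have p: "card Pos * \<eta> \<le> B" using bnd[of "\<Union>i\<in>Pos. J i"] by simp
  have "m (\<Union>i\<in>Neg. J i) = (\<Sum>i\<in>Neg. m (J i))"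
    by (rule fam_add[OF add fP(2) Jdisj]) (auto simp: Neg_def)
  also have "\<dots> \<le> (\<Sum>i\<in>Neg. - \<eta>)"
    by (rule sum_mono) (use J in \<open>fastforce simp: Neg_def\<close>)
  finally have n: "card Neg * \<eta> \<le> B" using bnd[of "\<Union>i\<in>Neg. J i"] by simp
  have "real N = real (card Pos) + real (card Neg)" using cardeq by simp
  hence "real N * \<eta> = card Pos * \<eta> + card Neg * \<eta>" by (simp add: distrib_right)
  then show False using p n N' by linarith
qed


lemma glide:
  fixes \<mu> :: "nat \<Rightarrow> nat set \<Rightarrow> real"
  assumes add: "\<And>n A B. A \<inter> B = {} \<Longrightarrow> \<mu> n (A \<union> B) = \<mu> n A + \<mu> n B"
    and bnd: "\<And>n A. \<bar>\<mu> n A\<bar> \<le> B"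
    and c0: "\<And>A e. e > 0 \<Longrightarrow> finite {n. e \<le> \<bar>\<mu> n A\<bar>}"
    and diag: "\<And>n. \<mu> n {n} \<ge> \<delta>" and dpos: "\<delta> > 0"
  shows False
proof -
  define d where "d = \<delta>/4"
  have d: "d > 0" using dpos by (simp add: d_def)
  define nx where "nx s = (SOME n. n \<in> snd s \<and> \<bar>\<mu> n (fst s)\<bar> < d)" for s :: "nat set \<times> nat set"
  define pool where "pool s = (SOME Q. Q \<subseteq> snd s - {nx s} \<and> infinite Q \<and> (\<forall>J\<subseteq>Q. \<bar>\<mu> (nx s) J\<bar> \<le> d))"
    for s :: "nat set \<times> nat set"
  define st where "st = rec_nat ({}, UNIV) (\<lambda>k s. (insert (nx s) (fst s), pool s))"
  have st0: "st 0 = ({}, UNIV)" and stS: "st (Suc k) = (insert (nx (st k)) (fst (st k)), pool (st k))" for k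
    by (simp_all add: st_def)
  define I where "I s \<longleftrightarrow> finite (fst s) \<and> infinite (snd s) \<and> fst s \<inter> snd s = {}"
    for s :: "nat set \<times> nat set"
  have nx_ok: "nx s \<in> snd s \<and> \<bar>\<mu> (nx s) (fst s)\<bar> < d" if "I s" for s
  proof -
    have "finite {n. d \<le> \<bar>\<mu> n (fst s)\<bar>}" using c0 d by blast
    hence "infinite (snd s - {n. d \<le> \<bar>\<mu> n (fst s)\<bar>})" using that I_def Diff_infinite_finite by blast
    then obtain n where "n \<in> snd s - {n. d \<le> \<bar>\<mu> n (fst s)\<bar>}" using infinite_imp_nonempty by blast
    hence "n \<in> snd s \<and> \<bar>\<mu> n (fst s)\<bar> < d" by auto
    thus ?thesis unfolding nx_def by (rule someI)
  qed
  have pool_ok: "pool s \<subseteq> snd s - {nx s} \<and> infinite (pool s) \<and> (\<forall>J\<subseteq>pool s. \<bar>\<mu> (nx s) J\<bar> \<le> d)"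
    if "I s" for s
  proof -
    have "infinite (snd s - {nx s})" using that I_def by simp
    from step_small[of "\<mu> (nx s)", OF add bnd this d] obtain Q where
      "Q \<subseteq> snd s - {nx s} \<and> infinite Q \<and> (\<forall>J\<subseteq>Q. \<bar>\<mu> (nx s) J\<bar> \<le> d)" by blast
    thus ?thesis unfolding pool_def by (rule someI)
  qed
  have Ist: "I (st k)" for k
  proof (induction k)
    case 0 show ?case by (simp add: st0 I_def)
  next
    case (Suc k)
    from nx_ok[OF Suc] pool_ok[OF Suc] show ?case using Suc unfolding stS I_def by auto
  qed
  define n where "n k = nx (st k)" for k
  define F where "F k = fst (st k)" for k
  define P where "P k = snd (st k)" for k
  have nP: "n k \<in> P k" and nF: "\<bar>\<mu> (n k) (F k)\<bar> < d" for k
    using nx_ok[OF Ist[of k]] by (auto simp: n_def F_def P_def)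
  have FS: "F (Suc k) = insert (n k) (F k)" and PS: "P (Suc k) \<subseteq> P k - {n k}"
    and small: "\<And>J. J \<subseteq> P (Suc k) \<Longrightarrow> \<bar>\<mu> (n k) J\<bar> \<le> d" for k
    using pool_ok[OF Ist[of k]] by (auto simp: F_def P_def n_def stS)
  have disj: "F k \<inter> P k = {}" for k using Ist[of k] by (simp add: I_def F_def P_def)
  have mono: "F i \<subseteq> F j \<and> P j \<subseteq> P i \<and> F j \<subseteq> F i \<union> P i" if "i \<le> j" for i j
    using that
  proof (induction j rule: dec_induct)
    case base show ?case by simp
  next
    case (step j)
    then show ?case using FS[of j] PS[of j] nP[of j] by auto
  qed
  define Js where "Js = (\<Union>k. F k)"
  have key: "\<mu> (n k) Js \<ge> \<delta>/2" for k
  proof -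
    have sub1: "F (Suc k) \<subseteq> Js" unfolding Js_def by blast
    have split: "Js = (F k \<union> {n k}) \<union> (Js - F (Suc k))" using FS[of k] sub1 by auto
    have restP: "Js - F (Suc k) \<subseteq> P (Suc k)"
    proof
      fix x assume x: "x \<in> Js - F (Suc k)"
      then obtain j where xj: "x \<in> F j" "x \<notin> F (Suc k)" unfolding Js_def by auto
      show "x \<in> P (Suc k)"
      proof (cases "j \<le> Suc k")
        case True then show ?thesis using mono[OF True] xj by auto
      next
        case False then show ?thesis using mono[of "Suc k" j] xj by auto
      qed
    qed
    have nk: "n k \<notin> F k" using nP[of k] disj[of k] by auto
    have "\<mu> (n k) Js = \<mu> (n k) (F k \<union> {n k}) + \<mu> (n k) (Js - F (Suc k))"
      by (subst split, rule add) (use FS in auto)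
    also have "\<mu> (n k) (F k \<union> {n k}) = \<mu> (n k) (F k) + \<mu> (n k) {n k}" by (rule add) (use nk in auto)
    finally have eq: "\<mu> (n k) Js = \<mu> (n k) (F k) + \<mu> (n k) {n k} + \<mu> (n k) (Js - F (Suc k))" .
    have a: "\<mu> (n k) (F k) > - d" using nF[of k] by (simp add: abs_less_iff)
    have b: "\<mu> (n k) (Js - F (Suc k)) \<ge> - d" using small[OF restP] by (simp add: abs_le_iff)
    show ?thesis using eq a b diag[of "n k"] d_def by linarith
  qed
  have lt: "n a \<noteq> n b" if "a < b" for a b
  proof -
    have "n a \<in> F b" using FS[of a] mono[of "Suc a" b] that by auto
    thus ?thesis using nP[of b] disj[of b] by auto
  qed
  have injn: "inj n"
    by (rule injI) (metis lt linorder_neqE_nat)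
  have "range n \<subseteq> {m. \<delta>/2 \<le> \<bar>\<mu> m Js\<bar>}" 
  proof
    fix x assume "x \<in> range n"
    then obtain k where "x = n k" by blast
    then show "x \<in> {m. \<delta>/2 \<le> \<bar>\<mu> m Js\<bar>}" using key[of k] by auto
  qed
  moreover have "finite {m. \<delta>/2 \<le> \<bar>\<mu> m Js\<bar>}" using c0[of "\<delta>/2" Js] dpos by linarith
  ultimately have "finite (range n)" using finite_subset by blast
  hence "finite (UNIV :: nat set)" using injn finite_imageD by blast
  then show False by simp
qed

lemma l1_summable: "l1 a \<Longrightarrow> a summable_on UNIV"
  unfolding l1_def by (rule abs_summable_summable)

lemma l1_iff_summable: "l1 a \<longleftrightarrow> a summable_on UNIV"
  unfolding l1_def using summable_on_iff_abs_summable_on_complex by blast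

lemma l1_add: "l1 a \<Longrightarrow> l1 b \<Longrightarrow> l1 (\<lambda>g. a g + b g)"
  unfolding l1_iff_summable by (rule summable_on_add)

lemma l1_scale: "l1 a \<Longrightarrow> l1 (\<lambda>g. c * a g)"
  unfolding l1_iff_summable by (rule summable_on_cmult_right)

lemma l1_diff: "l1 a \<Longrightarrow> l1 b \<Longrightarrow> l1 (\<lambda>g. a g - b g)"
  using l1_add[of a "\<lambda>g. (-1) * b g"] l1_scale[of b "-1"] by simp

lemma l1_zero: "l1 (\<lambda>_. 0)"
  unfolding l1_def by simp

lemma l1_finsupp: "finite S \<Longrightarrow> (\<And>g. g \<notin> S \<Longrightarrow> a g = 0) \<Longrightarrow> l1 a"
proof -
  assume S: "finite S" "\<And>g. g \<notin> S \<Longrightarrow> a g = 0"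
  have "(\<lambda>g. norm (a g)) summable_on S" using S(1) by simp
  moreover have "(\<lambda>g. norm (a g)) summable_on S \<longleftrightarrow> (\<lambda>g. norm (a g)) summable_on UNIV"
    by (rule summable_on_cong_neutral) (use S(2) in auto)
  ultimately show ?thesis unfolding l1_def by simp
qed

lemma l1_delta: "l1 (delta h)"
  by (rule l1_finsupp[of "{h}"]) (auto simp: delta_def)

lemma infsum_single_pt:
  assumes "\<And>g. g \<noteq> h \<Longrightarrow> f g = 0"
  shows "infsum f A = (if h \<in> A then f h else 0)"
proof -
  have "infsum f A = infsum f (A \<inter> {h})"
    by (rule infsum_cong_neutral) (use assms in auto)
  then show ?thesis by (cases "h \<in> A") auto
qed

lemma l1norm_nonneg: "l1norm a \<ge> 0"
  unfolding l1norm_def by (rule infsum_nonneg) simp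

lemma l1norm_delta: "l1norm (delta h) = 1"
  unfolding l1norm_def by (subst infsum_single_pt[of h]) (auto simp: delta_def)

lemma l1norm_zero: "l1norm (\<lambda>_. 0) = 0"
  unfolding l1norm_def by simp

lemma pair_delta: "pair f (delta h) = f h"
  unfolding pair_def by (subst infsum_single_pt[of h]) (auto simp: delta_def)

lemma c0_add: "c0 f \<Longrightarrow> c0 f' \<Longrightarrow> c0 (\<lambda>x. f x + f' x)"
  unfolding c0_def
proof (intro allI impI)
  fix e :: real assume H: "\<forall>e>0. finite {x. e \<le> cmod (f x)}" "\<forall>e>0. finite {x. e \<le> cmod (f' x)}" "e > 0"
  have "{x. e \<le> cmod (f x + f' x)} \<subseteq> {x. e/2 \<le> cmod (f x)} \<union> {x. e/2 \<le> cmod (f' x)}"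
  proof
    fix x assume "x \<in> {x. e \<le> cmod (f x + f' x)}"
    then have "e \<le> cmod (f x) + cmod (f' x)" using norm_triangle_ineq[of "f x" "f' x"] by simp
    then show "x \<in> {x. e/2 \<le> cmod (f x)} \<union> {x. e/2 \<le> cmod (f' x)}" by auto
  qed
  moreover have "finite {x. e/2 \<le> cmod (f x)} \<and> finite {x. e/2 \<le> cmod (f' x)}"
    using H half_gt_zero by blast
  then have "finite ({x. e/2 \<le> cmod (f x)} \<union> {x. e/2 \<le> cmod (f' x)})" by simp
  ultimately show "finite {x. e \<le> cmod (f x + f' x)}" using finite_subset by blast
qed

lemma c0_scale: "c0 f \<Longrightarrow> c0 (\<lambda>x. c * f x)"
  unfolding c0_def
proof (intro allI impI)
  fix e :: real assume H: "\<forall>e>0. finite {x. e \<le> cmod (f x)}" "e > 0"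
  show "finite {x. e \<le> cmod (c * f x)}"
  proof (cases "c = 0")
    case True then show ?thesis using \<open>e > 0\<close> by simp
  next
    case False
    have "{x. e \<le> cmod (c * f x)} = {x. e / cmod c \<le> cmod (f x)}"
      using False by (auto simp: norm_mult field_simps)
    then show ?thesis using H False by simp
  qed
qed

lemma Bop_zero_val: "Bop T \<Longrightarrow> T (\<lambda>_. 0) = (\<lambda>_. 0)"
proof -
  assume B: "Bop T"
  have "T (\<lambda>g. 0 * (\<lambda>_. 0) g) = (\<lambda>g. 0 * T (\<lambda>_. 0) g)" using B l1_zero unfolding Bop_def by blast
  then show ?thesis by simp
qed

lemma Bop_add:
  fixes T T' :: "('g \<Rightarrow> complex) \<Rightarrow> ('g \<Rightarrow> complex)"
  assumes "Bop T" "Bop T'"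
  shows "Bop (\<lambda>a g. T a g + T' a g)"
proof -
  obtain K where K: "\<And>a g. l1 a \<Longrightarrow> norm (T a g) \<le> K * l1norm a" using assms(1) unfolding Bop_def by blast
  obtain K' where K': "\<And>a g. l1 a \<Longrightarrow> norm (T' a g) \<le> K' * l1norm a" using assms(2) unfolding Bop_def by blast
  have b: "norm (T a g + T' a g) \<le> (K + K') * l1norm a" if "l1 a" for a g
    using norm_triangle_ineq[of "T a g" "T' a g"] K[OF that, of g] K'[OF that, of g]
    by (simp add: distrib_right)
  show ?thesis unfolding Bop_def
  proof (intro conjI allI impI)
    fix a :: "'g \<Rightarrow> complex" assume "l1 a" then show "c0 (\<lambda>g. T a g + T' a g)"
      using assms unfolding Bop_def by (simp add: c0_add)
  next
    fix a b :: "'g \<Rightarrow> complex" assume "l1 a" "l1 b"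
    then show "(\<lambda>g. T (\<lambda>g. a g + b g) g + T' (\<lambda>g. a g + b g) g) = (\<lambda>g. T a g + T' a g + (T b g + T' b g))"
      using assms unfolding Bop_def by (auto simp: algebra_simps)
  next
    fix a :: "'g \<Rightarrow> complex" and c assume "l1 a"
    then show "(\<lambda>g. T (\<lambda>g. c * a g) g + T' (\<lambda>g. c * a g) g) = (\<lambda>g. c * (T a g + T' a g))"
      using assms unfolding Bop_def by (auto simp: algebra_simps)
  next
    fix a :: "'g \<Rightarrow> complex" assume "\<not> l1 a"
    then show "(\<lambda>g. T a g + T' a g) = (\<lambda>_. 0)" using assms unfolding Bop_def by auto
  next
    show "\<exists>K. \<forall>a g. l1 a \<longrightarrow> norm (T a g + T' a g) \<le> K * l1norm a" using b by blast
  qed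
qed

lemma Bop_scale:
  fixes T :: "('g \<Rightarrow> complex) \<Rightarrow> ('g \<Rightarrow> complex)"
  assumes "Bop T"
  shows "Bop (\<lambda>a g. c * T a g)"
proof -
  obtain K where K: "\<And>a g. l1 a \<Longrightarrow> norm (T a g) \<le> K * l1norm a" using assms(1) unfolding Bop_def by blast
  have b: "norm (c * T a g) \<le> (norm c * K) * l1norm a" if "l1 a" for a g
    using K[OF that, of g] by (simp add: norm_mult mult.assoc mult_left_mono)
  show ?thesis unfolding Bop_def
  proof (intro conjI allI impI)
    fix a :: "'g \<Rightarrow> complex" assume "l1 a" then show "c0 (\<lambda>g. c * T a g)"
      using assms unfolding Bop_def by (simp add: c0_scale)
  next
    fix a b :: "'g \<Rightarrow> complex" assume "l1 a" "l1 b"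
    then show "(\<lambda>g. c * T (\<lambda>g. a g + b g) g) = (\<lambda>g. c * T a g + c * T b g)"
      using assms unfolding Bop_def by (auto simp: algebra_simps)
  next
    fix a :: "'g \<Rightarrow> complex" and d assume "l1 a"
    then show "(\<lambda>g. c * T (\<lambda>g. d * a g) g) = (\<lambda>g. d * (c * T a g))"
      using assms unfolding Bop_def by (auto simp: algebra_simps)
  next
    fix a :: "'g \<Rightarrow> complex" assume "\<not> l1 a"
    then show "(\<lambda>g. c * T a g) = (\<lambda>_. 0)" using assms unfolding Bop_def by auto
  next
    show "\<exists>K. \<forall>a g. l1 a \<longrightarrow> norm (c * T a g) \<le> K * l1norm a" using b by blast
  qed
qed

lemma opnorm_le:
  assumes "\<And>a g. l1 a \<Longrightarrow> norm (T a g) \<le> C * l1norm a" "C \<ge> 0"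
  shows "opnorm T \<le> C"
  unfolding opnorm_def
proof (rule cSup_least)
  have "norm (T (\<lambda>_. 0) undefined) \<in> {norm (T a g) |a g. l1 a \<and> l1norm a \<le> 1}"
  proof -
    have "\<exists>a g. norm (T (\<lambda>_. 0) undefined) = norm (T a g) \<and> l1 a \<and> l1norm a \<le> 1"
      by (rule exI[of _ "\<lambda>_. 0"], rule exI[of _ undefined]) (simp add: l1_zero l1norm_zero)
    then show ?thesis by simp
  qed
  then show "{norm (T a g) |a g. l1 a \<and> l1norm a \<le> 1} \<noteq> {}" by blast
next
  fix x assume "x \<in> {norm (T a g) |a g. l1 a \<and> l1norm a \<le> 1}"
  then obtain a g where "x = norm (T a g)" "l1 a" "l1norm a \<le> 1" by blast
  then have x: "x \<le> C * l1norm a" using assms(1)[of a g] by simp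
  have "C * l1norm a \<le> C * 1" by (rule mult_left_mono) (use \<open>l1norm a \<le> 1\<close> assms(2) in auto)
  then show "x \<le> C" using x by linarith
qed

lemma opnorm_nonneg:
  assumes "Bop T"
  shows "opnorm T \<ge> 0"
proof -
  obtain K where K: "\<And>a g. l1 a \<Longrightarrow> norm (T a g) \<le> K * l1norm a" using assms(1) unfolding Bop_def by blast
  have "bdd_above {norm (T a g) |a g. l1 a \<and> l1norm a \<le> 1}"
  proof (rule bdd_aboveI)
    fix x assume "x \<in> {norm (T a g) |a g. l1 a \<and> l1norm a \<le> 1}"
    then obtain a g where "x = norm (T a g)" "l1 a" "l1norm a \<le> 1" by blast
    then have x: "x \<le> K * l1norm a" using K[of a g] by simp
    have "K * l1norm a \<le> max K 0 * l1norm a" by (rule mult_right_mono) (auto simp: l1norm_nonneg)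
    also have "\<dots> \<le> max K 0 * 1" by (rule mult_left_mono) (use \<open>l1norm a \<le> 1\<close> in auto)
    finally show "x \<le> max K 0" using x by linarith
  qed
  moreover have "norm (T (\<lambda>_. 0) undefined) \<in> {norm (T a g) |a g. l1 a \<and> l1norm a \<le> 1}"
  proof -
    have "\<exists>a g. norm (T (\<lambda>_. 0) undefined) = norm (T a g) \<and> l1 a \<and> l1norm a \<le> 1"
      by (rule exI[of _ "\<lambda>_. 0"], rule exI[of _ undefined]) (simp add: l1_zero l1norm_zero)
    then show ?thesis by simp
  qed
  ultimately have "norm (T (\<lambda>_. 0) undefined) \<le> opnorm T" unfolding opnorm_def by (rule cSup_upper[rotated])
  then show ?thesis using norm_ge_zero order_trans by blast
qed


lemma Bop_addD: "Bop T \<Longrightarrow> l1 a \<Longrightarrow> l1 b \<Longrightarrow> T (\<lambda>g. a g + b g) = (\<lambda>g. T a g + T b g)"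
  unfolding Bop_def by blast

lemma Bop_scaleD: "Bop T \<Longrightarrow> l1 a \<Longrightarrow> T (\<lambda>g. c * a g) = (\<lambda>g. c * T a g)"
  unfolding Bop_def by blast

lemma Bop_c0D: "Bop T \<Longrightarrow> l1 a \<Longrightarrow> c0 (T a)"
  unfolding Bop_def by blast

lemma Bop_boundD: "Bop T \<Longrightarrow> \<exists>K. \<forall>a g. l1 a \<longrightarrow> norm (T a g) \<le> K * l1norm a"
  unfolding Bop_def by blast

lemma Bop_fin:
  fixes R :: "('g \<Rightarrow> complex) \<Rightarrow> ('g \<Rightarrow> complex)"
  assumes B: "Bop R" and a: "l1 a" and F: "finite F"
  shows "R (\<lambda>g. if g \<in> F then a g else 0) x = (\<Sum>t\<in>F. a t * R (delta t) x)"
  using F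
proof (induction F rule: finite_induct)
  case empty
  then show ?case using Bop_zero_val[OF B] by simp
next
  case (insert y F)
  have eq: "(\<lambda>g. if g \<in> insert y F then a g else 0) = (\<lambda>g. a y * delta y g + (if g \<in> F then a g else 0))"
    using insert(2) by (auto simp: delta_def)
  have l1a: "l1 (\<lambda>g. a y * delta y g)" by (rule l1_scale[OF l1_delta])
  have l1b: "l1 (\<lambda>g. if g \<in> F then a g else 0)" by (rule l1_finsupp[OF insert(1)]) auto
  have "R (\<lambda>g. a y * delta y g + (if g \<in> F then a g else 0)) =
        (\<lambda>x. R (\<lambda>g. a y * delta y g) x + R (\<lambda>g. if g \<in> F then a g else 0) x)"
    by (rule Bop_addD[OF B l1a l1b])
  moreover have "R (\<lambda>g. a y * delta y g) = (\<lambda>x. a y * R (delta y) x)"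
    by (rule Bop_scaleD[OF B l1_delta])
  ultimately show ?case using eq insert by simp
qed

lemma Bop_cont:
  fixes R :: "('g \<Rightarrow> complex) \<Rightarrow> ('g \<Rightarrow> complex)"
  assumes B: "Bop R" and ent: "\<And>t. norm (R (delta t) s) \<le> \<epsilon>" and a: "l1 a"
  shows "norm (R a s) \<le> \<epsilon> * l1norm a"
proof (rule field_le_epsilon)
  fix e :: real assume e: "e > 0"
  have eps: "\<epsilon> \<ge> 0" using ent[of undefined] norm_ge_zero order_trans by blast
  obtain K where K: "\<And>a g. l1 a \<Longrightarrow> norm (R a g) \<le> K * l1norm a" using B unfolding Bop_def by blast
  define \<eta> where "\<eta> = e / (\<bar>K\<bar> + 1)"
  have eta: "\<eta> > 0" using e by (simp add: \<eta>_def)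
  have sa: "(\<lambda>g. norm (a g)) summable_on UNIV" using a unfolding l1_def .
  obtain F where F: "finite F" "dist (sum (\<lambda>g. norm (a g)) F) (l1norm a) \<le> \<eta>"
    using infsum_finite_approximation[OF sa eta] unfolding l1norm_def by blast
  define aF where "aF = (\<lambda>g. if g \<in> F then a g else 0)"
  define rest where "rest = (\<lambda>g. a g - aF g)"
  have l1F: "l1 aF" unfolding aF_def by (rule l1_finsupp[OF F(1)]) auto
  have l1r: "l1 rest" unfolding rest_def by (rule l1_diff[OF a l1F])
  have "a = (\<lambda>g. aF g + rest g)" unfolding rest_def by simp
  hence "R a s = R aF s + R rest s" using Bop_addD[OF B l1F l1r] by simp
  hence tri: "norm (R a s) \<le> norm (R aF s) + norm (R rest s)" by (simp add: norm_triangle_ineq)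
  have "R aF s = (\<Sum>t\<in>F. a t * R (delta t) s)" unfolding aF_def by (rule Bop_fin[OF B a F(1)])
  hence "norm (R aF s) \<le> (\<Sum>t\<in>F. norm (a t) * \<epsilon>)"
    using norm_sum[of "\<lambda>t. a t * R (delta t) s" F]
      sum_mono[of F "\<lambda>t. norm (a t * R (delta t) s)" "\<lambda>t. norm (a t) * \<epsilon>"]
      ent by (simp add: norm_mult mult_left_mono order_trans)
  hence n1: "norm (R aF s) \<le> \<epsilon> * sum (\<lambda>g. norm (a g)) F" by (simp add: sum_distrib_left mult.commute)
  have nF: "(\<Sum>\<^sub>\<infinity>g. norm (aF g)) = sum (\<lambda>g. norm (a g)) F"
  proof -
    have "(\<Sum>\<^sub>\<infinity>g. norm (aF g)) = (\<Sum>\<^sub>\<infinity>g\<in>F. norm (a g))"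
      by (rule infsum_cong_neutral) (auto simp: aF_def)
    then show ?thesis using F(1) by simp
  qed
  have sF: "(\<lambda>g. norm (aF g)) summable_on UNIV" using l1F unfolding l1_def .
  have sr: "(\<lambda>g. norm (rest g)) summable_on UNIV" using l1r unfolding l1_def .
  have "l1norm a = (\<Sum>\<^sub>\<infinity>g. norm (aF g) + norm (rest g))"
    unfolding l1norm_def by (rule infsum_cong) (auto simp: rest_def aF_def)
  also have "\<dots> = sum (\<lambda>g. norm (a g)) F + l1norm rest"
    using infsum_add[OF sF sr] nF unfolding l1norm_def by simp
  finally have split: "l1norm a = sum (\<lambda>g. norm (a g)) F + l1norm rest" .
  have rsmall: "l1norm rest \<le> \<eta>" using split F(2) by (simp add: dist_real_def)
  have rnn: "l1norm rest \<ge> 0" by (rule l1norm_nonneg)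
  have "norm (R rest s) \<le> K * l1norm rest" using K[OF l1r] .
  also have "\<dots> \<le> \<bar>K\<bar> * l1norm rest" using rnn by (simp add: mult_right_mono)
  also have "\<dots> \<le> \<bar>K\<bar> * \<eta>" using rsmall by (simp add: mult_left_mono)
  also have "\<dots> \<le> e"
  proof -
    have "\<bar>K\<bar> * \<eta> = e * (\<bar>K\<bar> / (\<bar>K\<bar> + 1))" unfolding \<eta>_def by simp
    also have "\<dots> \<le> e * 1" using e by (intro mult_left_mono) auto
    finally show ?thesis by simp
  qed
  finally have n2: "norm (R rest s) \<le> e" .
  have "\<epsilon> * sum (\<lambda>g. norm (a g)) F \<le> \<epsilon> * l1norm a"
    using split rnn eps by (simp add: mult_left_mono)
  then show "norm (R a s) \<le> \<epsilon> * l1norm a + e" using tri n1 n2 by linarith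
qed

lemma weight_pos: "weight \<omega> \<Longrightarrow> \<omega> g > 0" unfolding weight_def by blast
lemma weight_sub: "weight \<omega> \<Longrightarrow> \<omega> (s + t) \<le> \<omega> s * \<omega> t" unfolding weight_def by blast
lemma weight_0: "weight \<omega> \<Longrightarrow> \<omega> 0 = 1" unfolding weight_def by blast

lemma Omega_pos: "weight \<omega> \<Longrightarrow> Omega \<omega> g h > 0"
  unfolding Omega_def using weight_pos by (metis divide_pos_pos mult_pos_pos)

lemma Omega_le1: "weight \<omega> \<Longrightarrow> Omega \<omega> g h \<le> 1"
  unfolding Omega_def using weight_pos[of \<omega> g] weight_pos[of \<omega> h] weight_sub[of \<omega> g h]
  by (simp add: divide_le_eq_1)

lemma Omega_0: "weight \<omega> \<Longrightarrow> Omega \<omega> 0 h = 1"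
  unfolding Omega_def using weight_pos[of \<omega> h] weight_0[of \<omega>] by simp

lemma Omega_inv_bound:
  assumes w: "weight \<omega>"
  shows "1 / Omega \<omega> t h \<le> \<omega> t * \<omega> (- t)"
proof -
  have p: "\<omega> t > 0" "\<omega> h > 0" "\<omega> (t + h) > 0" "\<omega> (- t) > 0" using weight_pos[OF w] by auto
  have "\<omega> h = \<omega> (- t + (t + h))" by (simp add: add.assoc[symmetric])
  also have "\<dots> \<le> \<omega> (- t) * \<omega> (t + h)" by (rule weight_sub[OF w])
  finally have hb: "\<omega> h \<le> \<omega> (- t) * \<omega> (t + h)" .
  have "1 / Omega \<omega> t h = \<omega> t * \<omega> h / \<omega> (t + h)" unfolding Omega_def using p by simp
  also have "\<dots> \<le> \<omega> t * (\<omega> (- t) * \<omega> (t + h)) / \<omega> (t + h)"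
    using hb p by (intro divide_right_mono mult_left_mono) auto
  also have "\<dots> = \<omega> t * \<omega> (- t)" using p by simp
  finally show ?thesis .
qed

lemma conv_delta_right:
  "conv \<omega> b (delta h) = (\<lambda>k. b (k - h) * complex_of_real (Omega \<omega> (k - h) h))"
proof
  fix k
  have ne: "b g * delta h (- g + k) * complex_of_real (Omega \<omega> g (- g + k)) = 0" if "g \<noteq> k - h" for g
  proof -
    have "- g + k \<noteq> h"
    proof
      assume "- g + k = h"
      then have "g + (- g + k) = g + h" by simp
      then have "k = g + h" by (simp add: add.assoc[symmetric])
      then show False using that by simp
    qed
    then show ?thesis by (simp add: delta_def)
  qed
  have hk: "- (k - h) + k = h" by (simp add: minus_diff_eq)
  show "conv \<omega> b (delta h) k = b (k - h) * complex_of_real (Omega \<omega> (k - h) h)"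
    unfolding conv_def by (subst infsum_single_pt[of "k - h"]) (use ne hk in \<open>auto simp: delta_def\<close>)
qed

lemma shift_summable:
  fixes a :: "'g::group_add \<Rightarrow> complex"
  assumes "l1 a"
  shows "(\<lambda>k. norm (a (k + c))) summable_on UNIV" "(\<lambda>k. norm (a (c + k))) summable_on UNIV"
    "(\<Sum>\<^sub>\<infinity>k. norm (a (c + k))) = l1norm a"
proof -
  have s: "(\<lambda>g. norm (a g)) summable_on UNIV" using assms unfolding l1_def .
  have i1: "inj (\<lambda>k. k + c)" by (rule injI) (metis add_right_cancel)
  have u1: "range (\<lambda>k. k + c) = UNIV"
    by (rule surjI[of _ "\<lambda>x. x - c"]) simp
  have i2: "inj (\<lambda>k. c + k)" by (rule injI) (metis add_left_cancel)
  have u2: "range (\<lambda>k. c + k) = UNIV"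
    by (rule surjI[of _ "\<lambda>x. - c + x"]) simp
  show "(\<lambda>k. norm (a (k + c))) summable_on UNIV"
    using summable_on_reindex[OF i1, of "\<lambda>g. norm (a g)"] s u1 by (simp add: o_def)
  show "(\<lambda>k. norm (a (c + k))) summable_on UNIV"
    using summable_on_reindex[OF i2, of "\<lambda>g. norm (a g)"] s u2 by (simp add: o_def)
  show "(\<Sum>\<^sub>\<infinity>k. norm (a (c + k))) = l1norm a"
    using infsum_reindex[OF i2, of "\<lambda>g. norm (a g)"] u2 unfolding l1norm_def by (simp add: o_def)
qed

lemma l1_conv_delta:
  assumes w: "weight \<omega>" and b: "l1 b"
  shows "l1 (conv \<omega> b (delta h))"
proof -
  have eq: "(\<lambda>k. norm (b (k + - h))) = (\<lambda>k. norm (b (k - h)))"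
    by (simp only: diff_conv_add_uminus)
  have sg: "(\<lambda>k. norm (b (k - h))) summable_on UNIV"
    using shift_summable(1)[OF b, of "- h"] unfolding eq .
  have bd: "norm (b (k - h) * complex_of_real (Omega \<omega> (k - h) h)) \<le> norm (b (k - h))" for k
  proof -
    have o1: "Omega \<omega> (k - h) h > 0" "Omega \<omega> (k - h) h \<le> 1"
      using Omega_pos[OF w] Omega_le1[OF w] by auto
    have "norm (b (k - h) * complex_of_real (Omega \<omega> (k - h) h)) = norm (b (k - h)) * Omega \<omega> (k - h) h"
      using o1(1) by (simp add: norm_mult)
    also have "\<dots> \<le> norm (b (k - h))"
      by (rule mult_left_le) (use o1 in auto)
    finally show ?thesis .
  qed
  have "(\<lambda>k. norm (b (k - h) * complex_of_real (Omega \<omega> (k - h) h))) summable_on UNIV"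
    by (rule Infinite_Sum.abs_summable_on_comparison_test'[OF sg bd])
  then show ?thesis unfolding l1_def conv_delta_right .
qed

lemma conv_delta_delta:
  assumes w: "weight \<omega>"
  shows "conv \<omega> (delta 0) (delta h) = delta h"
proof
  fix k
  show "conv \<omega> (delta 0) (delta h) k = delta h k"
    unfolding conv_delta_right using Omega_0[OF w, of h] by (auto simp: delta_def)
qed

lemma act_c0_delta:
  assumes w: "weight \<omega>"
  shows "act_c0 \<omega> (delta h) \<mu> 0 = \<mu> h"
  unfolding act_c0_def using conv_delta_delta[OF w] pair_delta by simp

definition wt :: "('g::group_add \<Rightarrow> real) \<Rightarrow> 'g \<Rightarrow> 'g \<Rightarrow> complex" where
  "wt \<omega> t0 h = complex_of_real (1 / Omega \<omega> t0 h)"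

definition SA :: "('g::group_add \<Rightarrow> real) \<Rightarrow> 'g \<Rightarrow> 'g \<Rightarrow> 'g set \<Rightarrow> ('g \<Rightarrow> complex) \<Rightarrow> 'g \<Rightarrow> complex" where
  "SA \<omega> s0 t0 A = (\<lambda>a. if l1 a then (\<lambda>x. if x = s0 then (\<Sum>\<^sub>\<infinity>h\<in>A. a (t0 + h) * wt \<omega> t0 h) else 0)
                       else (\<lambda>_. 0))"

definition Eop :: "'g \<Rightarrow> 'g \<Rightarrow> ('g \<Rightarrow> complex) \<Rightarrow> 'g \<Rightarrow> complex" where
  "Eop s t = (\<lambda>a. if l1 a then (\<lambda>x. if x = s then a t else 0) else (\<lambda>_. 0))"

lemma c0_finsupp: "finite S \<Longrightarrow> (\<And>x. x \<notin> S \<Longrightarrow> f x = 0) \<Longrightarrow> c0 f"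
  unfolding c0_def
proof (intro allI impI)
  fix e :: real assume S: "finite S" "\<And>x. x \<notin> S \<Longrightarrow> f x = 0" and e: "e > 0"
  have "{x. e \<le> cmod (f x)} \<subseteq> S" using S(2) e by force
  then show "finite {x. e \<le> cmod (f x)}" using S(1) finite_subset by blast
qed

lemma norm_le_l1norm:
  assumes "l1 a" shows "norm (a t) \<le> l1norm a"
proof -
  have "(\<Sum>\<^sub>\<infinity>g\<in>{t}. norm (a g)) \<le> (\<Sum>\<^sub>\<infinity>g. norm (a g))"
    by (rule infsum_mono_neutral) (use assms in \<open>auto simp: l1_def\<close>)
  then show ?thesis unfolding l1norm_def by simp
qed

lemma wt_bound: "weight \<omega> \<Longrightarrow> norm (wt \<omega> t0 h) \<le> \<omega> t0 * \<omega> (- t0)"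
  unfolding wt_def norm_of_real using Omega_pos[of \<omega> t0 h] Omega_inv_bound[of \<omega> t0 h] by simp

lemma SA_summ:
  fixes a :: "'g::group_add \<Rightarrow> complex"
  assumes w: "weight \<omega>" and a: "l1 a"
  shows "(\<lambda>h. norm (a (t0 + h) * wt \<omega> t0 h)) summable_on A"
    "(\<lambda>h. a (t0 + h) * wt \<omega> t0 h) summable_on A"
    "norm (\<Sum>\<^sub>\<infinity>h\<in>A. a (t0 + h) * wt \<omega> t0 h) \<le> (\<omega> t0 * \<omega> (- t0)) * l1norm a"
proof -
  define C where "C = \<omega> t0 * \<omega> (- t0)"
  have bd: "norm (a (t0 + h) * wt \<omega> t0 h) \<le> C * norm (a (t0 + h))" for h
  proof -
    have "norm (wt \<omega> t0 h) * norm (a (t0 + h)) \<le> C * norm (a (t0 + h))"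
      by (rule mult_right_mono) (use wt_bound[OF w, of t0 h] C_def in auto)
    then show ?thesis by (simp add: norm_mult mult.commute)
  qed
  have s0: "(\<lambda>h. norm (a (t0 + h))) summable_on UNIV" by (rule shift_summable(2)[OF a])
  have sC: "(\<lambda>h. C * norm (a (t0 + h))) summable_on UNIV" by (rule summable_on_cmult_right[OF s0])
  have sU: "(\<lambda>h. norm (a (t0 + h) * wt \<omega> t0 h)) summable_on UNIV"
    by (rule Infinite_Sum.abs_summable_on_comparison_test'[OF sC bd])
  show sA: "(\<lambda>h. norm (a (t0 + h) * wt \<omega> t0 h)) summable_on A"
    by (rule summable_on_subset[OF sU]) simp
  show "(\<lambda>h. a (t0 + h) * wt \<omega> t0 h) summable_on A"
    by (rule abs_summable_summable[OF sA])
  have "norm (\<Sum>\<^sub>\<infinity>h\<in>A. a (t0 + h) * wt \<omega> t0 h) \<le> (\<Sum>\<^sub>\<infinity>h\<in>A. norm (a (t0 + h) * wt \<omega> t0 h))"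
    by (rule norm_infsum_bound[OF sA])
  also have "\<dots> \<le> (\<Sum>\<^sub>\<infinity>h. C * norm (a (t0 + h)))"
  proof (rule infsum_mono_neutral[OF sA sC])
    fix h show "norm (a (t0 + h) * wt \<omega> t0 h) \<le> C * norm (a (t0 + h))" by (rule bd)
  next
    fix h have "C \<ge> 0" unfolding C_def using weight_pos[OF w] by (simp add: less_imp_le)
    then show "C * norm (a (t0 + h)) \<ge> 0" by simp
  qed auto
  also have "\<dots> = C * l1norm a"
    using infsum_cmult_right[of C "\<lambda>h. norm (a (t0 + h))" UNIV] shift_summable(3)[OF a, of t0] s0 by simp
  finally show "norm (\<Sum>\<^sub>\<infinity>h\<in>A. a (t0 + h) * wt \<omega> t0 h) \<le> (\<omega> t0 * \<omega> (- t0)) * l1norm a"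
    unfolding C_def .
qed


lemma SA_bound:
  assumes w: "weight \<omega>" and a: "l1 a"
  shows "norm (SA \<omega> s0 t0 A a g) \<le> (\<omega> t0 * \<omega> (- t0)) * l1norm a"
proof (cases "g = s0")
  case True then show ?thesis unfolding SA_def using a SA_summ(3)[OF w a] by simp
next
  case False
  have "0 \<le> (\<omega> t0 * \<omega> (- t0)) * l1norm a"
    using weight_pos[OF w, of t0] weight_pos[OF w, of "- t0"] l1norm_nonneg[of a] by simp
  then show ?thesis unfolding SA_def using a False by simp
qed

lemma Bop_SA:
  fixes s0 t0 :: "'g::group_add"
  assumes w: "weight \<omega>"
  shows "Bop (SA \<omega> s0 t0 A)"
  unfolding Bop_def
proof (intro conjI allI impI)
  fix a :: "'g \<Rightarrow> complex" assume "l1 a"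
  then show "c0 (SA \<omega> s0 t0 A a)" unfolding SA_def by (intro c0_finsupp[of "{s0}"]) auto
next
  fix a b :: "'g \<Rightarrow> complex" assume a: "l1 a" and b: "l1 b"
  have ab: "l1 (\<lambda>g. a g + b g)" by (rule l1_add[OF a b])
  have "(\<Sum>\<^sub>\<infinity>h\<in>A. (a (t0 + h) + b (t0 + h)) * wt \<omega> t0 h)
      = (\<Sum>\<^sub>\<infinity>h\<in>A. a (t0 + h) * wt \<omega> t0 h + b (t0 + h) * wt \<omega> t0 h)"
    by (simp add: distrib_right)
  also have "\<dots> = (\<Sum>\<^sub>\<infinity>h\<in>A. a (t0 + h) * wt \<omega> t0 h) + (\<Sum>\<^sub>\<infinity>h\<in>A. b (t0 + h) * wt \<omega> t0 h)"
    by (rule infsum_add[OF SA_summ(2)[OF w a] SA_summ(2)[OF w b]])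
  finally show "SA \<omega> s0 t0 A (\<lambda>g. a g + b g) = (\<lambda>g. SA \<omega> s0 t0 A a g + SA \<omega> s0 t0 A b g)"
    unfolding SA_def using a b ab by auto
next
  fix a :: "'g \<Rightarrow> complex" and c assume a: "l1 a"
  have ca: "l1 (\<lambda>g. c * a g)" by (rule l1_scale[OF a])
  have "(\<Sum>\<^sub>\<infinity>h\<in>A. c * a (t0 + h) * wt \<omega> t0 h) = (\<Sum>\<^sub>\<infinity>h\<in>A. c * (a (t0 + h) * wt \<omega> t0 h))"
    by (simp add: mult.assoc)
  also have "\<dots> = c * (\<Sum>\<^sub>\<infinity>h\<in>A. a (t0 + h) * wt \<omega> t0 h)"
    by (rule infsum_cmult_right) (rule SA_summ(2)[OF w a])
  finally show "SA \<omega> s0 t0 A (\<lambda>g. c * a g) = (\<lambda>g. c * SA \<omega> s0 t0 A a g)"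
    unfolding SA_def using a ca by auto
next
  fix a :: "'g \<Rightarrow> complex" assume "\<not> l1 a"
  then show "SA \<omega> s0 t0 A a = (\<lambda>_. 0)" unfolding SA_def by simp
next
  have "norm (SA \<omega> s0 t0 A a g) \<le> (\<omega> t0 * \<omega> (- t0)) * l1norm a" if a: "l1 a" for a :: "'g \<Rightarrow> complex" and g
  proof (cases "g = s0")
    case True then show ?thesis unfolding SA_def using a SA_summ(3)[OF w a] by simp
  next
    case False
    have "0 \<le> (\<omega> t0 * \<omega> (- t0)) * l1norm a"
      using weight_pos[OF w, of t0] weight_pos[OF w, of "- t0"] l1norm_nonneg[of a] by simp
    then show ?thesis unfolding SA_def using a False by simp
  qed
  then show "\<exists>K. \<forall>a g. l1 a \<longrightarrow> norm (SA \<omega> s0 t0 A a g) \<le> K * l1norm a" by blast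
qed

lemma SA_union:
  fixes s0 t0 :: "'g::group_add"
  assumes w: "weight \<omega>" and d: "A \<inter> B = {}"
  shows "SA \<omega> s0 t0 (A \<union> B) = (\<lambda>a x. SA \<omega> s0 t0 A a x + SA \<omega> s0 t0 B a x)"
proof (intro ext)
  fix a :: "'g \<Rightarrow> complex" and x
  show "SA \<omega> s0 t0 (A \<union> B) a x = SA \<omega> s0 t0 A a x + SA \<omega> s0 t0 B a x"
  proof (cases "l1 a")
    case True
    have "(\<Sum>\<^sub>\<infinity>h\<in>A \<union> B. a (t0 + h) * wt \<omega> t0 h)
        = (\<Sum>\<^sub>\<infinity>h\<in>A. a (t0 + h) * wt \<omega> t0 h) + (\<Sum>\<^sub>\<infinity>h\<in>B. a (t0 + h) * wt \<omega> t0 h)"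
      by (rule infsum_Un_disjoint[OF SA_summ(2)[OF w True] SA_summ(2)[OF w True] d])
    then show ?thesis unfolding SA_def using True by simp
  next
    case False then show ?thesis unfolding SA_def by simp
  qed
qed

lemma act_B_SA:
  fixes s0 t0 h :: "'g::group_add"
  assumes w: "weight \<omega>"
  shows "act_B \<omega> (delta h) (SA \<omega> s0 t0 {h}) = Eop s0 t0"
proof (intro ext)
  fix b :: "'g \<Rightarrow> complex" and x
  show "act_B \<omega> (delta h) (SA \<omega> s0 t0 {h}) b x = Eop s0 t0 b x"
  proof (cases "l1 b")
    case True
    have l: "l1 (conv \<omega> b (delta h))" by (rule l1_conv_delta[OF w True])
    have op: "Omega \<omega> t0 h > 0" by (rule Omega_pos[OF w])
    have "conv \<omega> b (delta h) (t0 + h) * wt \<omega> t0 h = b t0"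
      unfolding conv_delta_right wt_def using op by (simp add: of_real_divide)
    then show ?thesis unfolding act_B_def SA_def Eop_def using True l by simp
  next
    case False then show ?thesis unfolding act_B_def Eop_def by simp
  qed
qed

lemma Bop_Eop:
  fixes s t :: "'g::group_add"
  shows "Bop (Eop s t)"
  unfolding Bop_def
proof (intro conjI allI impI)
  fix a :: "'g \<Rightarrow> complex" assume "l1 a"
  then show "c0 (Eop s t a)" unfolding Eop_def by (intro c0_finsupp[of "{s}"]) auto
next
  fix a b :: "'g \<Rightarrow> complex" assume a: "l1 a" and b: "l1 b"
  then show "Eop s t (\<lambda>g. a g + b g) = (\<lambda>g. Eop s t a g + Eop s t b g)"
    unfolding Eop_def using l1_add[OF a b] by auto
next
  fix a :: "'g \<Rightarrow> complex" and c assume a: "l1 a"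
  then show "Eop s t (\<lambda>g. c * a g) = (\<lambda>g. c * Eop s t a g)"
    unfolding Eop_def using l1_scale[OF a] by auto
next
  fix a :: "'g \<Rightarrow> complex" assume "\<not> l1 a"
  then show "Eop s t a = (\<lambda>_. 0)" unfolding Eop_def by simp
next
  have "norm (Eop s t a g) \<le> 1 * l1norm a" if a: "l1 a" for a :: "'g \<Rightarrow> complex" and g
    unfolding Eop_def using a norm_le_l1norm[OF a, of t] l1norm_nonneg[of a] by simp
  then show "\<exists>K. \<forall>a g. l1 a \<longrightarrow> norm (Eop s t a g) \<le> K * l1norm a" by blast
qed

lemma fin_ops:
  fixes \<phi> :: "(('g::group_add \<Rightarrow> complex) \<Rightarrow> ('g \<Rightarrow> complex)) \<Rightarrow> ('g \<Rightarrow> complex)"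
    and Op :: "'p \<Rightarrow> ('g \<Rightarrow> complex) \<Rightarrow> ('g \<Rightarrow> complex)"
  assumes hadd: "\<And>T T'. Bop T \<Longrightarrow> Bop T' \<Longrightarrow> \<phi> (\<lambda>a g. T a g + T' a g) = (\<lambda>g. \<phi> T g + \<phi> T' g)"
    and hsc: "\<And>T c. Bop T \<Longrightarrow> \<phi> (\<lambda>a g. c * T a g) = (\<lambda>g. c * \<phi> T g)"
    and F: "finite F" and ops: "\<And>p. p \<in> F \<Longrightarrow> Bop (Op p)"
  shows "Bop (\<lambda>a x. \<Sum>p\<in>F. c p * Op p a x) \<and> \<phi> (\<lambda>a x. \<Sum>p\<in>F. c p * Op p a x) = (\<lambda>x. \<Sum>p\<in>F. c p * \<phi> (Op p) x)"
  using F ops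
proof (induction F rule: finite_induct)
  case empty
  have E: "Bop (Eop (0::'g) 0)" by (rule Bop_Eop)
  have z: "(\<lambda>a g. 0 * Eop (0::'g) 0 a g) = (\<lambda>a x. 0)" by simp
  have "Bop (\<lambda>a g. 0 * Eop (0::'g) 0 a g)" by (rule Bop_scale[OF E])
  moreover have "\<phi> (\<lambda>a g. 0 * Eop (0::'g) 0 a g) = (\<lambda>g. 0 * \<phi> (Eop 0 0) g)" by (rule hsc[OF E])
  ultimately show ?case using z by simp
next
  case (insert q F)
  have IH: "Bop (\<lambda>a x. \<Sum>p\<in>F. c p * Op p a x)" "\<phi> (\<lambda>a x. \<Sum>p\<in>F. c p * Op p a x) = (\<lambda>x. \<Sum>p\<in>F. c p * \<phi> (Op p) x)"
    using insert by auto
  have Bq: "Bop (Op q)" using insert by auto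
  have Bq': "Bop (\<lambda>a g. c q * Op q a g)" by (rule Bop_scale[OF Bq])
  have eq: "(\<lambda>a x. \<Sum>p\<in>insert q F. c p * Op p a x) = (\<lambda>a x. c q * Op q a x + (\<Sum>p\<in>F. c p * Op p a x))"
    using insert(1,2) by simp
  have "Bop (\<lambda>a x. c q * Op q a x + (\<Sum>p\<in>F. c p * Op p a x))"
    using Bop_add[OF Bq' IH(1)] by simp
  moreover have "\<phi> (\<lambda>a x. c q * Op q a x + (\<Sum>p\<in>F. c p * Op p a x)) = (\<lambda>x. c q * \<phi> (Op q) x + (\<Sum>p\<in>F. c p * \<phi> (Op p) x))"
    using hadd[OF Bq' IH(1)] hsc[OF Bq] IH(2) by simp
  ultimately show ?case using eq insert(1,2) by simp
qed


theorem mainTheorem6: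
  fixes \<omega> :: "'g::group_add \<Rightarrow> real"
    and \<phi> :: "(('g \<Rightarrow> complex) \<Rightarrow> ('g \<Rightarrow> complex)) \<Rightarrow> ('g \<Rightarrow> complex)"
  assumes "weight \<omega>"
    and "\<not> strongly_non_amenable \<omega>"
    and "bounded_module_hom \<omega> \<phi>"
    and "Bop T"
    and "c0 (\<lambda>(s, t). T (delta t) s)"
  shows "Mfun \<phi> T = 0"
proof -
  note w = assms(1)
  note H = assms(3)[unfolded bounded_module_hom_def]
  have hc0: "\<And>T. Bop T \<Longrightarrow> c0 (\<phi> T)" using H[THEN conjunct1] by blast
  have hadd: "\<And>T T'. Bop T \<Longrightarrow> Bop T' \<Longrightarrow> \<phi> (\<lambda>a g. T a g + T' a g) = (\<lambda>g. \<phi> T g + \<phi> T' g)"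
    using H[THEN conjunct2, THEN conjunct1] by blast
  have hsc: "\<And>T c. Bop T \<Longrightarrow> \<phi> (\<lambda>a g. c * T a g) = (\<lambda>g. c * \<phi> T g)"
    using H[THEN conjunct2, THEN conjunct2, THEN conjunct1] by blast
  have hmod: "\<And>a T. l1 a \<Longrightarrow> Bop T \<Longrightarrow> \<phi> (act_B \<omega> a T) = act_c0 \<omega> a (\<phi> T)"
    using H[THEN conjunct2, THEN conjunct2, THEN conjunct2, THEN conjunct2] by blast
  obtain K where hbd: "\<And>T g. Bop T \<Longrightarrow> norm (\<phi> T g) \<le> K * opnorm T"
    using H[THEN conjunct2, THEN conjunct2, THEN conjunct2, THEN conjunct1] by blast
  have bdK: "norm (\<phi> S g) \<le> \<bar>K\<bar> * C" if "Bop S" "opnorm S \<le> C" for S g C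
  proof -
    have "norm (\<phi> S g) \<le> K * opnorm S" by (rule hbd[OF that(1)])
    also have "\<dots> \<le> \<bar>K\<bar> * opnorm S" using opnorm_nonneg[OF that(1)] by (simp add: mult_right_mono)
    also have "\<dots> \<le> \<bar>K\<bar> * C" using that(2) by (simp add: mult_left_mono)
    finally show ?thesis .
  qed
  obtain \<epsilon>0 :: real where "infinite {g. \<omega> g * \<omega> (- g) < inverse \<epsilon>0}"
    using assms(2) unfolding strongly_non_amenable_def by blast
  then have "infinite (UNIV :: 'g set)" using infinite_super[OF subset_UNIV] by blast
  from infinite_countable_subset[OF this] obtain gs :: "nat \<Rightarrow> 'g" where injg: "inj gs" by blast
  \<comment> \<open>M vanishes on matrix units\<close>
  have E0: "\<phi> (Eop s t) 0 = 0" for s t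
  proof (rule ccontr)
    define m0 where "m0 = \<phi> (Eop s t) 0"
    assume "\<phi> (Eop s t) 0 \<noteq> 0"
    then have m0: "m0 \<noteq> 0" unfolding m0_def .
    have key: "\<phi> (SA \<omega> s t {h}) h = m0" for h
    proof -
      have "\<phi> (Eop s t) = act_c0 \<omega> (delta h) (\<phi> (SA \<omega> s t {h}))"
        using hmod[OF l1_delta Bop_SA[OF w]] act_B_SA[OF w] by metis
      then show ?thesis unfolding m0_def using act_c0_delta[OF w] by simp
    qed
    define C where "C = \<omega> t * \<omega> (- t)"
    have C0: "C \<ge> 0" unfolding C_def using weight_pos[OF w, of t] weight_pos[OF w, of "- t"] by simp
    have opSA: "opnorm (SA \<omega> s t A) \<le> C" for A
    proof (rule opnorm_le[OF _ C0])
      fix a :: "'g \<Rightarrow> complex" and g assume "l1 a"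
      then show "cmod (SA \<omega> s t A a g) \<le> C * l1norm a" unfolding C_def by (rule SA_bound[OF w])
    qed
    define cc where "cc = cnj m0 / complex_of_real (cmod m0)"
    have ncc: "cmod cc = 1" unfolding cc_def using m0 by (simp add: norm_divide)
    have ccm: "cc * m0 = complex_of_real (cmod m0)"
    proof -
      have "cc * m0 = (m0 * cnj m0) / complex_of_real (cmod m0)" unfolding cc_def by (simp add: mult.commute)
      also have "\<dots> = complex_of_real ((cmod m0)^2) / complex_of_real (cmod m0)"
        using complex_norm_square[of m0] by simp
      also have "\<dots> = complex_of_real (cmod m0)" using m0 by (simp add: power2_eq_square)
      finally show ?thesis .
    qed
    define \<mu> where "\<mu> n J = Re (cc * \<phi> (SA \<omega> s t (gs ` J)) (gs n))" for n J
    show False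
    proof (rule glide[of \<mu> "\<bar>K\<bar> * C" "cmod m0"])
      fix n and A B :: "nat set"
      assume d: "A \<inter> B = {}"
      have d': "gs ` A \<inter> gs ` B = {}" using d injg by (simp add: image_Int[symmetric])
      have "\<phi> (SA \<omega> s t (gs ` (A \<union> B))) = \<phi> (\<lambda>a x. SA \<omega> s t (gs ` A) a x + SA \<omega> s t (gs ` B) a x)"
        using SA_union[OF w d'] by (simp add: image_Un)
      also have "\<dots> = (\<lambda>x. \<phi> (SA \<omega> s t (gs ` A)) x + \<phi> (SA \<omega> s t (gs ` B)) x)"
        by (rule hadd[OF Bop_SA[OF w] Bop_SA[OF w]])
      finally show "\<mu> n (A \<union> B) = \<mu> n A + \<mu> n B" unfolding \<mu>_def by (simp add: distrib_left)
    next
      fix n A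
      have "\<bar>\<mu> n A\<bar> \<le> cmod (cc * \<phi> (SA \<omega> s t (gs ` A)) (gs n))" unfolding \<mu>_def by (rule abs_Re_le_cmod)
      also have "\<dots> = cmod (\<phi> (SA \<omega> s t (gs ` A)) (gs n))" using ncc by (simp add: norm_mult)
      also have "\<dots> \<le> \<bar>K\<bar> * C" by (rule bdK[OF Bop_SA[OF w] opSA])
      finally show "\<bar>\<mu> n A\<bar> \<le> \<bar>K\<bar> * C" .
    next
      fix A and e :: real assume e: "e > 0"
      have f: "finite {x. e \<le> cmod (\<phi> (SA \<omega> s t (gs ` A)) x)}"
        using hc0[OF Bop_SA[OF w]] e unfolding c0_def by blast
      have "{n. e \<le> \<bar>\<mu> n A\<bar>} \<subseteq> gs -` {x. e \<le> cmod (\<phi> (SA \<omega> s t (gs ` A)) x)}"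
      proof
        fix n assume "n \<in> {n. e \<le> \<bar>\<mu> n A\<bar>}"
        then have "e \<le> \<bar>\<mu> n A\<bar>" by simp
        also have "\<bar>\<mu> n A\<bar> \<le> cmod (cc * \<phi> (SA \<omega> s t (gs ` A)) (gs n))" unfolding \<mu>_def by (rule abs_Re_le_cmod)
        also have "\<dots> = cmod (\<phi> (SA \<omega> s t (gs ` A)) (gs n))" using ncc by (simp add: norm_mult)
        finally show "n \<in> gs -` {x. e \<le> cmod (\<phi> (SA \<omega> s t (gs ` A)) x)}" by simp
      qed
      moreover have "finite (gs -` {x. e \<le> cmod (\<phi> (SA \<omega> s t (gs ` A)) x)})"
        using finite_vimageI[OF f injg] .
      ultimately show "finite {n. e \<le> \<bar>\<mu> n A\<bar>}" using finite_subset by blast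
    next
      fix n
      show "\<mu> n {n} \<ge> cmod m0" unfolding \<mu>_def using key[of "gs n"] ccm by simp
    next
      show "cmod m0 > 0" using m0 by simp
    qed
  qed
  have small: "cmod (Mfun \<phi> T) \<le> \<bar>K\<bar> * \<epsilon>" if eps: "\<epsilon> > 0" for \<epsilon>
  proof -
    define F where "F = {p. \<epsilon> \<le> cmod (T (delta (snd p)) (fst p))}"
    have finF: "finite F"
    proof -
      have "finite {x. \<epsilon> \<le> cmod ((\<lambda>(s, t). T (delta t) s) x)}" using assms(5) eps unfolding c0_def by blast
      moreover have "{x. \<epsilon> \<le> cmod ((\<lambda>(s, t). T (delta t) s) x)} = F" unfolding F_def by (auto simp: split_beta)
      ultimately show ?thesis by simp
    qed
    define cf where "cf p = T (delta (snd p)) (fst p)" for p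
    define TF where "TF = (\<lambda>a x. \<Sum>p\<in>F. cf p * Eop (fst p) (snd p) a x)"
    have FO: "Bop (\<lambda>a x. \<Sum>p\<in>F. cf p * Eop (fst p) (snd p) a x) \<and>
        \<phi> (\<lambda>a x. \<Sum>p\<in>F. cf p * Eop (fst p) (snd p) a x) = (\<lambda>x. \<Sum>p\<in>F. cf p * \<phi> (Eop (fst p) (snd p)) x)"
      by (rule fin_ops[OF hadd hsc finF Bop_Eop])
    have TF: "Bop TF" "\<phi> TF = (\<lambda>x. \<Sum>p\<in>F. cf p * \<phi> (Eop (fst p) (snd p)) x)"
      unfolding TF_def using FO by (rule conjunct1, rule conjunct2)
    have TF0: "\<phi> TF 0 = 0" using TF(2) E0 by simp
    define R where "R = (\<lambda>a x. T a x + (-1) * TF a x)"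
    have BR: "Bop R" unfolding R_def by (rule Bop_add[OF assms(4) Bop_scale[OF TF(1)]])
    have TR: "T = (\<lambda>a x. TF a x + R a x)" unfolding R_def by simp
    have "\<phi> T = (\<lambda>x. \<phi> TF x + \<phi> R x)" using hadd[OF TF(1) BR] TR by simp
    then have MR: "Mfun \<phi> T = \<phi> R 0" unfolding Mfun_def pair_delta using TF0 by simp
    have ent: "norm (R (delta t) s') \<le> \<epsilon>" for t s'
    proof -
      have "TF (delta t) s' = (\<Sum>p\<in>F. cf p * (if s' = fst p then delta t (snd p) else 0))"
        unfolding TF_def Eop_def using l1_delta[of t] by simp
      also have "\<dots> = (\<Sum>p\<in>F. if p = (s', t) then cf p else 0)"
        by (intro sum.cong) (auto simp: delta_def)
      also have "\<dots> = (if (s', t) \<in> F then cf (s', t) else 0)" using finF by (simp add: sum.delta')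
      finally have "R (delta t) s' = (if (s', t) \<in> F then 0 else T (delta t) s')"
        unfolding R_def cf_def by simp
      then show ?thesis using eps unfolding F_def by auto
    qed
    have "opnorm R \<le> \<epsilon>"
      by (rule opnorm_le[OF Bop_cont[OF BR ent]]) (use eps in auto)
    then have "norm (\<phi> R 0) \<le> \<bar>K\<bar> * \<epsilon>" by (rule bdK[OF BR])
    then show ?thesis using MR by simp
  qed
  have "cmod (Mfun \<phi> T) \<le> 0"
  proof (rule field_le_epsilon)
    fix e :: real assume e: "e > 0"
    have "cmod (Mfun \<phi> T) \<le> \<bar>K\<bar> * (e / (\<bar>K\<bar> + 1))" by (rule small) (use e in simp)
    also have "\<dots> = e * (\<bar>K\<bar> / (\<bar>K\<bar> + 1))" by simp
    also have "\<dots> \<le> e * 1" using e by (intro mult_left_mono) auto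
    finally show "cmod (Mfun \<phi> T) \<le> 0 + e" by simp
  qed
  then show ?thesis by simp
qed

end
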